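(* Let $\beta\ge 2$ and let $Z_1,Z_2$ be finite sets with $Z_1\cap Z_2=\{u\}$. Let $\alpha_1:Z_1\to T_1$ and $\alpha_2:Z_2\to T_2$ be maps of $Z_1$, $Z_2$ to the leaves of $\beta$-HSTs $T_1,T_2$. Then there exist a $\beta$-HST $T$ and a map $\alpha:Z_1\cup Z_2\to T$ (to leaves of $T$) such that $d_\alpha(x,y)=d_{\alpha_1}(x,y)$ for all $x,y\in Z_1$, $d_\alpha(x,y)=d_{\alpha_2}(x,y)$ for all $x,y\in Z_2$, and $d_\alpha(x,y)\ge\max\{d_{\alpha_1}(x,u),d_{\alpha_2}(u,y)\}$ for all $x\in Z_1$, $y\in Z_2$. (That is, $\beta$-HSTs admit a perfect merge function.)
   Context: A $\beta$-HST is a metric on points mapped to the leaves of a rooted tree whose nodes $v$ carry values $\eta_v$ with $\eta_v=\beta\,\eta_u$ whenever $u$ is a child of $v$ and $\eta_v=1/\beta$ for every leaf $v$; the distance between two points is $\eta_z$ where $z$ is the least common ancestor of their leaves. For a map $\alpha$ into a $\beta$-HST, $d_\alpha(x,y)$ denotes the HST distance between the images of $x$ and $y$. *)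

theory Defs
  imports Main "HOL.Real"
begin

record 'v hst =
  nodes :: "'v set"
  edges :: "('v \<times> 'v) set"   \<comment> \<open>(u, v) \<in> edges: u is a child of v\<close>
  root  :: 'v
  eta   :: "'v \<Rightarrow> real"

definition rooted_tree :: "'v set \<Rightarrow> ('v \<times> 'v) set \<Rightarrow> 'v \<Rightarrow> bool" where
  "rooted_tree V E r \<longleftrightarrow>
     finite V \<and> r \<in> V \<and> E \<subseteq> V \<times> V \<and> (\<forall>w. (r, w) \<notin> E) \<and>
     (\<forall>v\<in>V. v \<noteq> r \<longrightarrow> (\<exists>!w. (v, w) \<in> E)) \<and>
     (\<forall>v\<in>V. (v, r) \<in> E\<^sup>*)"

definition is_leaf :: "'v hst \<Rightarrow> 'v \<Rightarrow> bool" where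
  "is_leaf T v \<longleftrightarrow> v \<in> nodes T \<and> (\<forall>u. (u, v) \<notin> edges T)"

definition is_HST :: "real \<Rightarrow> 'v hst \<Rightarrow> bool" where
  "is_HST \<beta> T \<longleftrightarrow>
     rooted_tree (nodes T) (edges T) (root T) \<and>
     (\<forall>u v. (u, v) \<in> edges T \<longrightarrow> eta T v = \<beta> * eta T u) \<and>
     (\<forall>v. is_leaf T v \<longrightarrow> eta T v = 1 / \<beta>)"

definition is_lca :: "'v hst \<Rightarrow> 'v \<Rightarrow> 'v \<Rightarrow> 'v \<Rightarrow> bool" where
  "is_lca T a b z \<longleftrightarrow>
     (a, z) \<in> (edges T)\<^sup>* \<and> (b, z) \<in> (edges T)\<^sup>* \<and>
     (\<forall>w. (a, w) \<in> (edges T)\<^sup>* \<and> (b, w) \<in> (edges T)\<^sup>* \<longrightarrow> (z, w) \<in> (edges T)\<^sup>*)"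

definition hst_dist :: "'v hst \<Rightarrow> 'v \<Rightarrow> 'v \<Rightarrow> real" where
  "hst_dist T a b = eta T (THE z. is_lca T a b z)"

definition d_map :: "'v hst \<Rightarrow> ('a \<Rightarrow> 'v) \<Rightarrow> 'a \<Rightarrow> 'a \<Rightarrow> real" where
  "d_map T \<alpha> x y = hst_dist T (\<alpha> x) (\<alpha> y)"

end

theory Submission
  imports Defs "HOL-Library.Nat_Bijection"
begin

lemma relpow_sv:
  fixes E :: "('a \<times> 'a) set"
  assumes sv: "\<And>x y z. (x,y)\<in>E \<Longrightarrow> (x,z)\<in>E \<Longrightarrow> y = z"
  shows "(x,y)\<in>E^^k \<Longrightarrow> (x,z)\<in>E^^k \<Longrightarrow> y = z"
proof (induction k arbitrary: y z)
  case 0 from "0" show ?case by auto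
next
  case (Suc k)
  from Suc.prems(1) obtain a where a: "(x,a)\<in>E^^k" "(a,y)\<in>E" by (rule relpow_Suc_E)
  from Suc.prems(2) obtain b where b: "(x,b)\<in>E^^k" "(b,z)\<in>E" by (rule relpow_Suc_E)
  from Suc.IH[OF a(1) b(1)] a(2) b(2) sv show ?case by blast
qed

lemma hst_sv:
  assumes "is_HST \<beta> T" "(x,y)\<in>edges T" "(x,z)\<in>edges T"
  shows "y = z"
proof -
  have t: "rooted_tree (nodes T) (edges T) (root T)" using assms(1) unfolding is_HST_def by blast
  have "x \<in> nodes T" "x \<noteq> root T" using t assms(2) unfolding rooted_tree_def by auto
  then show ?thesis using t assms(2,3) unfolding rooted_tree_def by blast
qed

lemma hst_relpow_sv:
  assumes "is_HST \<beta> T" "(x,y)\<in>edges T^^k" "(x,z)\<in>edges T^^k"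
  shows "y = z"
proof -
  have "\<And>x y z. (x,y)\<in>edges T \<Longrightarrow> (x,z)\<in>edges T \<Longrightarrow> y = z"
    using hst_sv[OF assms(1)] by blast
  then show ?thesis using relpow_sv[where E="edges T"] assms(2,3) by blast
qed

lemma hst_eta_pow:
  assumes "is_HST \<beta> T" "(x,y)\<in>edges T^^k"
  shows "eta T y = \<beta>^k * eta T x"
  using assms(2)
proof (induction k arbitrary: y)
  case 0 then show ?case by simp
next
  case (Suc k)
  from Suc.prems obtain a where a: "(x,a)\<in>edges T^^k" "(a,y)\<in>edges T" by (rule relpow_Suc_E)
  have "eta T y = \<beta> * eta T a" using assms(1) a(2) unfolding is_HST_def by blast
  then show ?case using Suc.IH[OF a(1)] by simp
qed

lemma hst_height_unique:
  assumes "is_HST \<beta> T" "\<beta> > 1" "is_leaf T a" "is_leaf T b"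
    "(a,z)\<in>edges T^^i" "(b,z)\<in>edges T^^j"
  shows "i = j"
proof -
  have ea: "eta T a = 1/\<beta>" "eta T b = 1/\<beta>" using assms(1,3,4) unfolding is_HST_def by auto
  have "eta T z = \<beta>^i * (1/\<beta>)" "eta T z = \<beta>^j * (1/\<beta>)"
    using hst_eta_pow[OF assms(1) assms(5)] hst_eta_pow[OF assms(1) assms(6)] ea by simp_all
  then have "\<beta>^i * (1/\<beta>) = \<beta>^j * (1/\<beta>)" by (simp only:)
  moreover have "1/\<beta> \<noteq> 0" using assms(2) by simp
  ultimately have "\<beta>^i = \<beta>^j" by (metis mult_cancel_right)
  then show ?thesis using assms(2) by (simp add: power_inject_exp)
qed

definition lev :: "'v hst \<Rightarrow> 'v \<Rightarrow> 'v \<Rightarrow> nat" where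
  "lev T a b = (LEAST k. \<exists>z. (a,z)\<in>edges T^^k \<and> (b,z)\<in>edges T^^k)"

lemma hst_common:
  assumes "is_HST \<beta> T" "\<beta> > 1" "is_leaf T a" "is_leaf T b"
  shows "\<exists>k z. (a,z)\<in>edges T^^k \<and> (b,z)\<in>edges T^^k"
proof -
  have "(a, root T)\<in>(edges T)\<^sup>*" "(b, root T)\<in>(edges T)\<^sup>*"
    using assms(1,3,4) unfolding is_HST_def rooted_tree_def is_leaf_def by auto
  then obtain i j where "(a, root T)\<in>edges T^^i" "(b, root T)\<in>edges T^^j"
    using rtrancl_power by metis
  moreover then have "i = j" using hst_height_unique assms by metis
  ultimately show ?thesis by blast
qed

lemma lev_ex:
  assumes "is_HST \<beta> T" "\<beta> > 1" "is_leaf T a" "is_leaf T b"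
  shows "\<exists>z. (a,z)\<in>edges T^^(lev T a b) \<and> (b,z)\<in>edges T^^(lev T a b)"
  unfolding lev_def using hst_common[OF assms] by (rule LeastI_ex)

lemma lev_le:
  assumes "(a,z)\<in>edges T^^k" "(b,z)\<in>edges T^^k"
  shows "lev T a b \<le> k"
  unfolding lev_def using assms by (blast intro: Least_le)

lemma lev_sym: "lev T a b = lev T b a"
  unfolding lev_def by metis

lemma lev_refl: "lev T a a = 0"
  using lev_le[where a=a and b=a and T=T and k=0 and z=a] by simp

lemma lev_ultra:
  assumes "is_HST \<beta> T" "\<beta> > 1" "is_leaf T a" "is_leaf T b" "is_leaf T c"
  shows "lev T a c \<le> max (lev T a b) (lev T b c)"
proof -
  obtain z1 where z1: "(a,z1)\<in>edges T^^(lev T a b)" "(b,z1)\<in>edges T^^(lev T a b)"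
    using lev_ex[OF assms(1-4)] by blast
  obtain z2 where z2: "(b,z2)\<in>edges T^^(lev T b c)" "(c,z2)\<in>edges T^^(lev T b c)"
    using lev_ex[OF assms(1,2,4,5)] by blast
  define i where "i = lev T a b"
  define j where "j = lev T b c"
  show ?thesis
  proof (cases "i \<le> j")
    case True
    then have "(b,z2)\<in>edges T^^(i + (j-i))" using z2 j_def by simp
    then obtain y where y: "(b,y)\<in>edges T^^i" "(y,z2)\<in>edges T^^(j-i)"
      unfolding relpow_add by blast
    have "y = z1" using hst_relpow_sv[OF assms(1) y(1)] z1 i_def by simp
    then have "(a,z2)\<in>edges T^^(i + (j-i))" using z1 y(2) i_def unfolding relpow_add by blast
    then have "(a,z2)\<in>edges T^^j" using True by simp
    then have "lev T a c \<le> j" using lev_le z2(2) j_def by metis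
    then show ?thesis using i_def j_def by simp
  next
    case False
    then have "(b,z1)\<in>edges T^^(j + (i-j))" using z1 i_def by simp
    then obtain y where y: "(b,y)\<in>edges T^^j" "(y,z1)\<in>edges T^^(i-j)"
      unfolding relpow_add by blast
    have "y = z2" using hst_relpow_sv[OF assms(1) y(1)] z2 j_def by simp
    then have "(c,z1)\<in>edges T^^(j + (i-j))" using z2 y(2) j_def unfolding relpow_add by blast
    then have "(c,z1)\<in>edges T^^i" using False by simp
    then have "lev T a c \<le> i" using lev_le z1(1) i_def by metis
    then show ?thesis using i_def j_def by simp
  qed
qed

lemma hst_dist_lev:
  assumes "is_HST \<beta> T" "\<beta> > 1" "is_leaf T a" "is_leaf T b"
  shows "hst_dist T a b = \<beta>^(lev T a b) / \<beta>"
proof -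
  define k where "k = lev T a b"
  obtain z where z: "(a,z)\<in>edges T^^k" "(b,z)\<in>edges T^^k"
    using lev_ex[OF assms] k_def by blast
  have lca: "is_lca T a b z"
    unfolding is_lca_def
  proof (intro conjI allI impI)
    show "(a,z)\<in>(edges T)\<^sup>*" "(b,z)\<in>(edges T)\<^sup>*" using z relpow_imp_rtrancl by metis+
    fix w assume "(a, w) \<in> (edges T)\<^sup>* \<and> (b, w) \<in> (edges T)\<^sup>*"
    then obtain p q where pq: "(a,w)\<in>edges T^^p" "(b,w)\<in>edges T^^q" using rtrancl_power by metis
    have "p = q" using hst_height_unique[OF assms pq] .
    then have "k \<le> p" using lev_le pq k_def by metis
    then have "(a,w)\<in>edges T^^(k + (p-k))" using pq by simp
    then obtain y where y: "(a,y)\<in>edges T^^k" "(y,w)\<in>edges T^^(p-k)"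
      unfolding relpow_add by blast
    have "y = z" using hst_relpow_sv[OF assms(1) y(1) z(1)] .
    then show "(z,w)\<in>(edges T)\<^sup>*" using y(2) relpow_imp_rtrancl by metis
  qed
  have "(THE z. is_lca T a b z) = z"
  proof (rule the_equality[where P="is_lca T a b", OF lca])
    fix z' assume "is_lca T a b z'"
    then have "(z',z)\<in>(edges T)\<^sup>*" "(z,z')\<in>(edges T)\<^sup>*" "(a,z')\<in>(edges T)\<^sup>*"
      using lca unfolding is_lca_def by blast+
    then obtain p q m where pq: "(z',z)\<in>edges T^^p" "(z,z')\<in>edges T^^q" "(a,z')\<in>edges T^^m"
      using rtrancl_power by metis
    have "(a,z')\<in>edges T^^(k+q)" using z(1) pq(2) unfolding relpow_add by blast
    then have "k + q = m" using hst_height_unique[OF assms(1,2,3,3)] pq(3) by metis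
    moreover have "(a,z)\<in>edges T^^(m+p)" using pq(3) pq(1) unfolding relpow_add by blast
    then have "m + p = k" using hst_height_unique[OF assms(1,2,3,3)] z(1) by metis
    ultimately have "q = 0" by simp
    then show "z' = z" using pq(2) by simp
  qed
  moreover have "eta T a = 1/\<beta>" using assms(1,3) unfolding is_HST_def by auto
  ultimately show ?thesis unfolding hst_dist_def using hst_eta_pow[OF assms(1) z(1)] k_def by simp
qed


lemma ultra_realize:
  fixes Z :: "'a set" and L :: "'a \<Rightarrow> 'a \<Rightarrow> nat" and \<beta> :: real and u :: 'a
  assumes fin: "finite Z" and uZ: "u \<in> Z" and b1: "\<beta> > 1"
    and refl: "\<And>x. x\<in>Z \<Longrightarrow> L x x = 0"
    and sym: "\<And>x y. x\<in>Z \<Longrightarrow> y\<in>Z \<Longrightarrow> L x y = L y x"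
    and ultra: "\<And>x y z. x\<in>Z \<Longrightarrow> y\<in>Z \<Longrightarrow> z\<in>Z \<Longrightarrow> L x z \<le> max (L x y) (L y z)"
  shows "\<exists>(T::nat hst) \<alpha>. is_HST \<beta> T \<and> (\<forall>x\<in>Z. is_leaf T (\<alpha> x)) \<and>
           (\<forall>x\<in>Z. \<forall>y\<in>Z. hst_dist T (\<alpha> x) (\<alpha> y) = \<beta>^(L x y)/\<beta>)"
proof -
  obtain g :: "'a \<Rightarrow> nat" where g: "inj_on g Z" using finite_imp_inj_to_nat_seg[OF fin] by blast
  define rep where "rep k x = (LEAST m. \<exists>y\<in>Z. g y = m \<and> L x y \<le> k)" for k x
  define N where "N k x = prod_encode (k, rep k x)" for k x
  define K where "K = Max ((\<lambda>(x,y). L x y) ` (Z \<times> Z))"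
  have LK: "L x y \<le> K" if "x\<in>Z" "y\<in>Z" for x y
    unfolding K_def using fin that by (intro Max_ge) auto
  have repex: "\<exists>z\<in>Z. g z = rep k x \<and> L x z \<le> k" if "x\<in>Z" for x k
  proof -
    have ex: "\<exists>z\<in>Z. g z = g x \<and> L x z \<le> k" using that refl by force
    show ?thesis unfolding rep_def by (rule LeastI_ex) (use ex in blast)
  qed
  have rep_eq: "rep k x = rep k y \<longleftrightarrow> L x y \<le> k" if xy: "x\<in>Z" "y\<in>Z" for k x y
  proof
    assume "L x y \<le> k"
    then have "\<forall>z\<in>Z. (L x z \<le> k) = (L y z \<le> k)"
    proof (intro ballI)
      fix z assume z: "z \<in> Z"
      have "L y z \<le> max (L y x) (L x z)" "L x z \<le> max (L x y) (L y z)" "L y x = L x y"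
        using ultra[OF xy(2) xy(1) z] ultra[OF xy(1) xy(2) z] sym[OF xy(2) xy(1)] by auto
      then show "(L x z \<le> k) = (L y z \<le> k)" using \<open>L x y \<le> k\<close> by (auto simp: max_def split: if_splits)
    qed
    then have "(\<lambda>m. \<exists>z\<in>Z. g z = m \<and> L x z \<le> k) = (\<lambda>m. \<exists>z\<in>Z. g z = m \<and> L y z \<le> k)"
      by blast
    then show "rep k x = rep k y" unfolding rep_def by simp
  next
    assume eq: "rep k x = rep k y"
    obtain z where z: "z\<in>Z" "g z = rep k x" "L x z \<le> k" using repex[OF xy(1)] by blast
    obtain z' where z': "z'\<in>Z" "g z' = rep k y" "L y z' \<le> k" using repex[OF xy(2)] by blast
    have "z = z'" using g z z' eq by (metis inj_on_def)
    then show "L x y \<le> k" using ultra[OF xy(1) z(1) xy(2)] sym[OF z(1) xy(2)] z z' by simp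
  qed
  have N_eq: "N k x = N k' y \<longleftrightarrow> k = k' \<and> L x y \<le> k" if "x\<in>Z" "y\<in>Z" for k k' x y
    unfolding N_def using rep_eq[OF that] by auto
  have fstN: "fst (prod_decode (N k x)) = k" for k x unfolding N_def by simp
  define T :: "nat hst" where "T = \<lparr>nodes = (\<lambda>(k,x). N k x) ` ({..K} \<times> Z),
      edges = (\<lambda>(k,x). (N k x, N (Suc k) x)) ` ({..<K} \<times> Z), root = N K u,
      eta = (\<lambda>c. \<beta>^(fst (prod_decode c)) / \<beta>)\<rparr>"
  have nodesT: "v \<in> nodes T \<longleftrightarrow> (\<exists>k x. k \<le> K \<and> x \<in> Z \<and> v = N k x)" for v
    unfolding T_def by auto
  have edgesT: "(v,w) \<in> edges T \<longleftrightarrow> (\<exists>k x. k < K \<and> x \<in> Z \<and> v = N k x \<and> w = N (Suc k) x)" for v w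
    unfolding T_def by auto
  have rootT: "root T = N K u" and etaT: "eta T c = \<beta>^(fst (prod_decode c)) / \<beta>" for c
    unfolding T_def by auto
  have up: "(N k x, N K x) \<in> (edges T)\<^sup>*" if "k \<le> K" "x \<in> Z" for k x
    using that(1)
  proof (induction k rule: inc_induct)
    case base then show ?case by simp
  next
    case (step n)
    have "(N n x, N (Suc n) x) \<in> edges T" using edgesT step that(2) by blast
    then show ?case using step.IH by (meson converse_rtrancl_into_rtrancl)
  qed
  have tree: "rooted_tree (nodes T) (edges T) (root T)"
    unfolding rooted_tree_def
  proof (intro conjI ballI allI impI)
    show "finite (nodes T)" unfolding T_def using fin by simp
    show "root T \<in> nodes T" using nodesT rootT uZ by auto
    show "edges T \<subseteq> nodes T \<times> nodes T"
    proof (rule subrelI)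
      fix a b assume "(a,b) \<in> edges T"
      then obtain k x where kx: "k < K" "x \<in> Z" "a = N k x" "b = N (Suc k) x" using edgesT by blast
      have "a \<in> nodes T" using nodesT kx less_imp_le by blast
      moreover have "b \<in> nodes T" using nodesT kx Suc_leI by blast
      ultimately show "(a,b) \<in> nodes T \<times> nodes T" by simp
    qed
    fix w show "(root T, w) \<notin> edges T" using edgesT rootT fstN by (metis less_irrefl)
  next
    fix v assume v: "v \<in> nodes T" "v \<noteq> root T"
    then obtain k x where kx: "k \<le> K" "x \<in> Z" "v = N k x" using nodesT by blast
    have "k \<noteq> K" using kx v(2) rootT N_eq[OF kx(2) uZ] LK[OF kx(2) uZ] by auto
    then have kK: "k < K" using kx by simp
    show "\<exists>!w. (v, w) \<in> edges T"
    proof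
      show "(v, N (Suc k) x) \<in> edges T" using edgesT kK kx by blast
      fix w assume "(v, w) \<in> edges T"
      then obtain k' x' where e: "k' < K" "x' \<in> Z" "v = N k' x'" "w = N (Suc k') x'" using edgesT by blast
      then have "k = k'" "L x x' \<le> k" using N_eq[OF kx(2) e(2)] kx by auto
      then have "N (Suc k) x = N (Suc k') x'" using N_eq[OF kx(2) e(2)] by auto
      then show "w = N (Suc k) x" using e by simp
    qed
  next
    fix v assume v: "v \<in> nodes T"
    then obtain k x where kx: "k \<le> K" "x \<in> Z" "v = N k x" using nodesT by blast
    have "N K x = root T" using rootT N_eq[OF kx(2) uZ] LK[OF kx(2) uZ] by auto
    then show "(v, root T) \<in> (edges T)\<^sup>*" using up kx by metis
  qed
  have hst: "is_HST \<beta> T"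
    unfolding is_HST_def
  proof (intro conjI allI impI tree)
    fix v w assume "(v, w) \<in> edges T"
    then obtain k x where "v = N k x" "w = N (Suc k) x" using edgesT by blast
    then show "eta T w = \<beta> * eta T v" using etaT fstN by simp
  next
    fix v assume "is_leaf T v"
    then have v: "v \<in> nodes T" "\<forall>w. (w, v) \<notin> edges T" unfolding is_leaf_def by auto
    then obtain k x where kx: "k \<le> K" "x \<in> Z" "v = N k x" using nodesT by blast
    have "k = 0"
    proof (rule ccontr)
      assume "k \<noteq> 0"
      then have "k - 1 < K" "Suc (k - 1) = k" using kx by linarith+
      then have "(N (k - 1) x, N (Suc (k - 1)) x) \<in> edges T" using edgesT kx by blast
      then have "(N (k - 1) x, v) \<in> edges T" using kx \<open>Suc (k - 1) = k\<close> by simp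
      then show False using v by blast
    qed
    then show "eta T v = 1 / \<beta>" using etaT fstN kx by simp
  qed
  have leaf: "is_leaf T (N 0 x)" if "x \<in> Z" for x
    unfolding is_leaf_def
  proof (intro conjI allI)
    show "N 0 x \<in> nodes T" using nodesT that by blast
    fix w show "(w, N 0 x) \<notin> edges T"
    proof
      assume "(w, N 0 x) \<in> edges T"
      then obtain k y where "N 0 x = N (Suc k) y" using edgesT by blast
      then have "fst (prod_decode (N 0 x)) = fst (prod_decode (N (Suc k) y))" by simp
      then show False using fstN by simp
    qed
  qed
  have path: "(N 0 x, w) \<in> edges T ^^ k \<longleftrightarrow> k \<le> K \<and> w = N k x" if x: "x \<in> Z" for x k w
  proof
    show "(N 0 x, w) \<in> edges T ^^ k \<Longrightarrow> k \<le> K \<and> w = N k x"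
    proof (induction k arbitrary: w)
      case 0 then show ?case by simp
    next
      case (Suc k)
      from Suc.prems obtain y where y: "(N 0 x, y) \<in> edges T ^^ k" "(y, w) \<in> edges T" by (rule relpow_Suc_E)
      from Suc.IH[OF y(1)] have yk: "k \<le> K" "y = N k x" by auto
      from y(2) obtain k' x' where e: "k' < K" "x' \<in> Z" "y = N k' x'" "w = N (Suc k') x'"
        using edgesT by blast
      then have "k = k'" "L x x' \<le> k" using N_eq[OF x e(2)] yk by auto
      then have "N (Suc k) x = N (Suc k') x'" using N_eq[OF x e(2)] by auto
      then show ?case using e \<open>k = k'\<close> by simp
    qed
    show "k \<le> K \<and> w = N k x \<Longrightarrow> (N 0 x, w) \<in> edges T ^^ k"
    proof (induction k arbitrary: w)
      case 0 then show ?case by simp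
    next
      case (Suc k)
      have "k < K" using Suc.prems by simp
      then have "(N k x, N (Suc k) x) \<in> edges T" using edgesT x by blast
      moreover have "(N 0 x, N k x) \<in> edges T ^^ k" using Suc.IH[of "N k x"] Suc.prems by simp
      ultimately show ?case using Suc.prems by (blast intro: relpow_Suc_I)
    qed
  qed
  have levL: "lev T (N 0 x) (N 0 y) = L x y" if xy: "x \<in> Z" "y \<in> Z" for x y
    unfolding lev_def
  proof (rule Least_equality)
    show "\<exists>z. (N 0 x, z) \<in> edges T ^^ L x y \<and> (N 0 y, z) \<in> edges T ^^ L x y"
      using path[OF xy(1)] path[OF xy(2)] LK[OF xy] N_eq[OF xy] by auto
    fix k assume "\<exists>z. (N 0 x, z) \<in> edges T ^^ k \<and> (N 0 y, z) \<in> edges T ^^ k"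
    then show "L x y \<le> k" using path[OF xy(1)] path[OF xy(2)] N_eq[OF xy] by auto
  qed
  show ?thesis
    using hst leaf levL hst_dist_lev[OF hst b1 leaf leaf] by metis
qed


theorem mainTheorem6:
  fixes \<beta> :: real and Z1 Z2 :: "'a set" and u :: 'a
    and T1 :: "'v hst" and T2 :: "'w hst"
    and \<alpha>1 :: "'a \<Rightarrow> 'v" and \<alpha>2 :: "'a \<Rightarrow> 'w"
  assumes "\<beta> \<ge> 2"
    and "finite Z1" and "finite Z2" and "Z1 \<inter> Z2 = {u}"
    and "is_HST \<beta> T1" and "is_HST \<beta> T2"
    and "\<forall>x\<in>Z1. is_leaf T1 (\<alpha>1 x)"
    and "\<forall>x\<in>Z2. is_leaf T2 (\<alpha>2 x)"
  shows "\<exists>(T :: nat hst) (\<alpha> :: 'a \<Rightarrow> nat).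
           is_HST \<beta> T \<and> (\<forall>x\<in>Z1 \<union> Z2. is_leaf T (\<alpha> x)) \<and>
           (\<forall>x\<in>Z1. \<forall>y\<in>Z1. d_map T \<alpha> x y = d_map T1 \<alpha>1 x y) \<and>
           (\<forall>x\<in>Z2. \<forall>y\<in>Z2. d_map T \<alpha> x y = d_map T2 \<alpha>2 x y) \<and>
           (\<forall>x\<in>Z1. \<forall>y\<in>Z2. d_map T \<alpha> x y \<ge> max (d_map T1 \<alpha>1 x u) (d_map T2 \<alpha>2 u y))"
proof -
  have b1: "\<beta> > 1" using assms(1) by simp
  have u1: "u \<in> Z1" and u2: "u \<in> Z2" using assms(4) by auto
  have both: "x = u" if "x \<in> Z1" "x \<in> Z2" for x using assms(4) that by auto
  define L1 where "L1 x y = lev T1 (\<alpha>1 x) (\<alpha>1 y)" for x y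
  define L2 where "L2 x y = lev T2 (\<alpha>2 x) (\<alpha>2 y)" for x y
  have S1: "L1 x y = L1 y x" and S2: "L2 x y = L2 y x" for x y
    unfolding L1_def L2_def using lev_sym by metis+
  have R1: "L1 x x = 0" and R2: "L2 x x = 0" for x
    unfolding L1_def L2_def using lev_refl by metis+
  have U1: "L1 x z \<le> max (L1 x y) (L1 y z)" if "x\<in>Z1" "y\<in>Z1" "z\<in>Z1" for x y z
    unfolding L1_def using lev_ultra[OF assms(5) b1] assms(7) that by blast
  have U2: "L2 x z \<le> max (L2 x y) (L2 y z)" if "x\<in>Z2" "y\<in>Z2" "z\<in>Z2" for x y z
    unfolding L2_def using lev_ultra[OF assms(6) b1] assms(8) that by blast
  have D1: "d_map T1 \<alpha>1 x y = \<beta>^(L1 x y)/\<beta>" if "x\<in>Z1" "y\<in>Z1" for x y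
    unfolding L1_def d_map_def using hst_dist_lev[OF assms(5) b1] assms(7) that by blast
  have D2: "d_map T2 \<alpha>2 x y = \<beta>^(L2 x y)/\<beta>" if "x\<in>Z2" "y\<in>Z2" for x y
    unfolding L2_def d_map_def using hst_dist_lev[OF assms(6) b1] assms(8) that by blast
  define L where "L x y = (if x\<in>Z1 \<and> y\<in>Z1 then L1 x y else if x\<in>Z2 \<and> y\<in>Z2 then L2 x y
      else if x\<in>Z1 then max (L1 x u) (L2 u y) else max (L1 y u) (L2 u x))" for x y
  have L11: "L x y = L1 x y" if "x\<in>Z1" "y\<in>Z1" for x y using that L_def by simp
  have L22: "L x y = L2 x y" if "x\<in>Z2" "y\<in>Z2" for x y
  proof (cases "x\<in>Z1 \<and> y\<in>Z1")
    case True then have "x = u" "y = u" using both that by auto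
    then show ?thesis using L_def R1 R2 by simp
  next
    case False then show ?thesis using L_def that by auto
  qed
  have L12: "L x y = max (L1 x u) (L2 u y)" if "x\<in>Z1" "y\<in>Z2" for x y
  proof (cases "y = u")
    case True then show ?thesis using that L_def[of x y] R2[of u] u1 by simp
  next
    case yu: False
    then have yZ: "y \<notin> Z1" using both that by blast
    show ?thesis
    proof (cases "x = u")
      case True then show ?thesis using that L_def[of x y] R1[of u] yZ u2 by simp
    next
      case False then have "x \<notin> Z2" using both that by blast
      then show ?thesis using that L_def[of x y] yZ by simp
    qed
  qed
  have L21: "L x y = max (L1 y u) (L2 u x)" if "x\<in>Z2" "y\<in>Z1" for x y
  proof (cases "x = u")
    case True then show ?thesis using that L_def[of x y] R2[of u] u1 S1[of y u] by simp
  next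
    case xu: False
    then have xZ: "x \<notin> Z1" using both that by blast
    show ?thesis
    proof (cases "y = u")
      case True then show ?thesis using that L_def[of x y] R1[of u] xZ u2 S2[of u x] by simp
    next
      case False then have "y \<notin> Z2" using both that by blast
      then show ?thesis using that L_def[of x y] xZ by simp
    qed
  qed
  have ultra: "L x z \<le> max (L x y) (L y z)" if xyz: "x\<in>Z1\<union>Z2" "y\<in>Z1\<union>Z2" "z\<in>Z1\<union>Z2" for x y z
  proof -
    consider "x\<in>Z1" "y\<in>Z1" "z\<in>Z1" | "x\<in>Z1" "y\<in>Z1" "z\<in>Z2" | "x\<in>Z1" "y\<in>Z2" "z\<in>Z1"
      | "x\<in>Z1" "y\<in>Z2" "z\<in>Z2" | "x\<in>Z2" "y\<in>Z1" "z\<in>Z1" | "x\<in>Z2" "y\<in>Z1" "z\<in>Z2"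
      | "x\<in>Z2" "y\<in>Z2" "z\<in>Z1" | "x\<in>Z2" "y\<in>Z2" "z\<in>Z2" using xyz by blast
    then show ?thesis
    proof cases
      case 1 then show ?thesis using L11 U1 by simp
    next
      case 2 then show ?thesis using L11 L12 U1[of x y u] u1 by (auto simp: max_def split: if_splits)
    next
      case 3 then show ?thesis using L11 L12 L21 U1[of x u z] S1[of u z] u1 by (auto simp: max_def split: if_splits)
    next
      case 4 then show ?thesis using L22 L12 U2[of u y z] u2 by (auto simp: max_def split: if_splits)
    next
      case 5 then show ?thesis using L11 L21 U1[of z y u] S1[of z y] u1 by (auto simp: max_def split: if_splits)
    next
      case 6 then show ?thesis using L22 L21 L12 U2[of x u z] S2[of x u] u2 by (auto simp: max_def split: if_splits)
    next
      case 7 then show ?thesis using L22 L21 U2[of u y x] S2[of y x] u2 by (auto simp: max_def split: if_splits)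
    next
      case 8 then show ?thesis using L22 U2 by simp
    qed
  qed
  have fin: "finite (Z1 \<union> Z2)" using assms(2,3) by simp
  have refl: "L x x = 0" if "x \<in> Z1 \<union> Z2" for x using that L11 L22 R1 R2 by auto
  have sym: "L x y = L y x" if "x \<in> Z1 \<union> Z2" "y \<in> Z1 \<union> Z2" for x y
    using that L11 L22 L12 L21 S1 S2 by auto
  obtain T :: "nat hst" and \<alpha> where T: "is_HST \<beta> T" "\<forall>x\<in>Z1 \<union> Z2. is_leaf T (\<alpha> x)"
      "\<forall>x\<in>Z1 \<union> Z2. \<forall>y\<in>Z1 \<union> Z2. hst_dist T (\<alpha> x) (\<alpha> y) = \<beta>^(L x y)/\<beta>"
    using ultra_realize[where Z="Z1 \<union> Z2" and L=L and u=u and \<beta>=\<beta>, OF fin _ b1 refl sym ultra] u1 by blast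
  have D: "d_map T \<alpha> x y = \<beta>^(L x y)/\<beta>" if "x \<in> Z1 \<union> Z2" "y \<in> Z1 \<union> Z2" for x y
    unfolding d_map_def using T(3) that by blast
  have mono: "\<beta>^a/\<beta> \<le> \<beta>^b/\<beta>" if "a \<le> b" for a b
    using b1 that by (intro divide_right_mono power_increasing) auto
  show ?thesis
  proof (intro exI conjI ballI)
    show "is_HST \<beta> T" by (rule T(1))
    show "is_leaf T (\<alpha> x)" if "x \<in> Z1 \<union> Z2" for x using T(2) that by blast
    show "d_map T \<alpha> x y = d_map T1 \<alpha>1 x y" if "x\<in>Z1" "y\<in>Z1" for x y
      using D[of x y] D1[OF that] L11[OF that] that by simp
    show "d_map T \<alpha> x y = d_map T2 \<alpha>2 x y" if "x\<in>Z2" "y\<in>Z2" for x y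
      using D[of x y] D2[OF that] L22[OF that] that by simp
    show "max (d_map T1 \<alpha>1 x u) (d_map T2 \<alpha>2 u y) \<le> d_map T \<alpha> x y" if "x\<in>Z1" "y\<in>Z2" for x y
    proof -
      have "d_map T \<alpha> x y = \<beta>^(max (L1 x u) (L2 u y))/\<beta>" using D[of x y] L12[OF that] that by simp
      moreover have "d_map T1 \<alpha>1 x u \<le> \<beta>^(max (L1 x u) (L2 u y))/\<beta>" using D1[OF that(1) u1] mono by simp
      moreover have "d_map T2 \<alpha>2 u y \<le> \<beta>^(max (L1 x u) (L2 u y))/\<beta>" using D2[OF u2 that(2)] mono by simp
      ultimately show ?thesis by simp
    qed
  qed
qed

end
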